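(* Let $K$ be a kite (built from a triangle with angles $\alpha,\beta$ adjacent to a side of length $1$) in standard position, and let $K_1=K,K_2,\dots,K_n$ be a kite unfolding sequence given by a combinatorics of length $n$ (i.e. $n-1$ rotations). Let $(x^{\alpha}_n,y^{\alpha}_n)$ and $(x^{\beta}_n,y^{\beta}_n)$ be the coordinates of the $\alpha$-vertex and $\beta$-vertex of $K_n$, and $(x_n,y_n)$ the coordinates of either of the two side vertices of $K_n$. Then: (1) $x^{\alpha}_n,y^{\alpha}_n,x^{\beta}_n,y^{\beta}_n$ are trigonometric polynomials in $\alpha,\beta$ with integer coefficients, depending only on the combinatorics, of degree at most $2n-2$; (2) $x_n=P(\alpha,\beta)+\frac{\sin\beta}{\sin(\alpha+\beta)}\cos(m\alpha+l\beta)$ and $y_n=Q(\alpha,\beta)+\frac{\sin\beta}{\sin(\alpha+\beta)}\sin(m\alpha+l\beta)$, where $P,Q$ are trigonometric polynomials with integer coefficients of degree at most $2n-2$ and $m,l$ are integers with $|m|+|l|\le 2n-1$.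
   Context: Let $T$ be a triangle with a side $AB$ of length $1$ whose adjacent angles are $\alpha$ (at $A$) and $\beta$ (at $B$). The kite $K$ is the union of $T$ and its reflection across $AB$; it has an $\alpha$-vertex $A$ (with angle $2\alpha$), a $\beta$-vertex $B$ (with angle $2\beta$), and two side vertices. The kite diagonal is the vector from the $\alpha$-vertex to the $\beta$-vertex, and the kite angle is the counterclockwise angle from the $x$-axis to the kite diagonal. $K$ is in standard position if its $\alpha$-vertex is at the origin and its $\beta$-vertex at $(1,0)$. A kite unfolding step replaces a kite by its image under rotation about its $\alpha$-vertex by $\pm2\alpha$ or about its $\beta$-vertex by $\pm2\beta$ (this corresponds to unfolding the triangle billiard along an orbit). A combinatorics of length $n$ is a sequence of $n-1$ such choices (angles $\pm2\alpha$ or $\pm2\beta$), producing kites $K_1=K,\dots,K_n$. A trigonometric polynomial in $\alpha,\beta$ with integer coefficients of degree at most $d$ is an integer linear combination of $\cos(a\alpha+b\beta)$ and $\sin(a\alpha+b\beta)$ with integers $|a|+|b|\le d$. *)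

theory Defs
  imports Complex_Main
begin

text \<open>Points of the plane are complex numbers; the coordinates of a point z are (Re z, Im z).\<close>

definition admissible :: "real \<Rightarrow> real \<Rightarrow> bool" where
  "admissible \<alpha> \<beta> \<longleftrightarrow> 0 < \<alpha> \<and> 0 < \<beta> \<and> \<alpha> + \<beta> < pi"

text \<open>Third vertex of the triangle T with A = 0, B = 1, angle alpha at A, angle beta at B,
  lying in the upper half plane.\<close>
definition tri_apex :: "real \<Rightarrow> real \<Rightarrow> complex" where
  "tri_apex \<alpha> \<beta> = (THE c. \<exists>t>0. \<exists>s>0. c = complex_of_real t * cis \<alpha> \<and>
                               c = 1 + complex_of_real s * cis (pi - \<beta>))"

type_synonym kite = "complex \<times> complex \<times> complex \<times> complex"

definition alpha_vertex :: "kite \<Rightarrow> complex" where "alpha_vertex K = fst K"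
definition beta_vertex :: "kite \<Rightarrow> complex" where "beta_vertex K = fst (snd K)"
definition side_vertex1 :: "kite \<Rightarrow> complex" where "side_vertex1 K = fst (snd (snd K))"
definition side_vertex2 :: "kite \<Rightarrow> complex" where "side_vertex2 K = snd (snd (snd K))"

text \<open>Kite in standard position: union of T and its reflection across AB (the real axis).\<close>
definition std_kite :: "real \<Rightarrow> real \<Rightarrow> kite" where
  "std_kite \<alpha> \<beta> = (0, 1, tri_apex \<alpha> \<beta>, cnj (tri_apex \<alpha> \<beta>))"

definition rot :: "complex \<Rightarrow> real \<Rightarrow> complex \<Rightarrow> complex" where
  "rot p \<theta> z = p + cis \<theta> * (z - p)"

definition rot_kite :: "complex \<Rightarrow> real \<Rightarrow> kite \<Rightarrow> kite" where
  "rot_kite p \<theta> K = (case K of (a, b, c, d) \<Rightarrow> (rot p \<theta> a, rot p \<theta> b, rot p \<theta> c, rot p \<theta> d))"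

datatype step = AlphaPlus | AlphaMinus | BetaPlus | BetaMinus

fun unfold_step :: "real \<Rightarrow> real \<Rightarrow> kite \<Rightarrow> step \<Rightarrow> kite" where
  "unfold_step \<alpha> \<beta> K AlphaPlus  = rot_kite (alpha_vertex K) (2 * \<alpha>) K"
| "unfold_step \<alpha> \<beta> K AlphaMinus = rot_kite (alpha_vertex K) (- 2 * \<alpha>) K"
| "unfold_step \<alpha> \<beta> K BetaPlus   = rot_kite (beta_vertex K) (2 * \<beta>) K"
| "unfold_step \<alpha> \<beta> K BetaMinus  = rot_kite (beta_vertex K) (- 2 * \<beta>) K"

text \<open>Last kite K_n of the unfolding sequence given by a combinatorics ws
  (a list of n-1 steps), starting from the kite in standard position.\<close>
definition last_kite :: "real \<Rightarrow> real \<Rightarrow> step list \<Rightarrow> kite" where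
  "last_kite \<alpha> \<beta> ws = foldl (unfold_step \<alpha> \<beta>) (std_kite \<alpha> \<beta>) ws"

definition trig_poly_on :: "nat \<Rightarrow> (real \<Rightarrow> real \<Rightarrow> real) \<Rightarrow> bool" where
  "trig_poly_on d f \<longleftrightarrow> (\<exists>c s :: int \<times> int \<Rightarrow> int. \<forall>\<alpha> \<beta>. admissible \<alpha> \<beta> \<longrightarrow>
     f \<alpha> \<beta> = (\<Sum>(a, b) \<in> {(a, b). \<bar>a\<bar> + \<bar>b\<bar> \<le> int d}.
        of_int (c (a, b)) * cos (of_int a * \<alpha> + of_int b * \<beta>)
      + of_int (s (a, b)) * sin (of_int a * \<alpha> + of_int b * \<beta>)))"

end

theory Submission
  imports Defs
begin

fun tv :: "int\<times>int\<times>int\<times>int \<Rightarrow> real \<Rightarrow> real \<Rightarrow> complex" where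
  "tv (x,y,a,b) \<alpha> \<beta> = Complex (of_int x) (of_int y) * cis (of_int a * \<alpha> + of_int b * \<beta>)"
fun tdeg :: "int\<times>int\<times>int\<times>int \<Rightarrow> int" where "tdeg (x,y,a,b) = \<bar>a\<bar> + \<bar>b\<bar>"
fun negt :: "int\<times>int\<times>int\<times>int \<Rightarrow> int\<times>int\<times>int\<times>int" where "negt (x,y,a,b) = (-x,-y,a,b)"
fun mult :: "int \<Rightarrow> int \<Rightarrow> int\<times>int\<times>int\<times>int \<Rightarrow> int\<times>int\<times>int\<times>int" where
  "mult p q (x,y,a,b) = (x,y,a+p,b+q)"

definition ev :: "(int\<times>int\<times>int\<times>int) list \<Rightarrow> real \<Rightarrow> real \<Rightarrow> complex" where
  "ev Z \<alpha> \<beta> = (\<Sum>t\<leftarrow>Z. tv t \<alpha> \<beta>)"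
definition degok :: "nat \<Rightarrow> (int\<times>int\<times>int\<times>int) list \<Rightarrow> bool" where
  "degok d Z \<longleftrightarrow> (\<forall>t\<in>set Z. tdeg t \<le> int d)"

lemma tv_neg: "tv (negt t) \<alpha> \<beta> = - tv t \<alpha> \<beta>"
  by (cases t) (simp add: complex_eq_iff)
lemma tv_mult: "tv (mult p q t) \<alpha> \<beta> = cis (of_int p * \<alpha> + of_int q * \<beta>) * tv t \<alpha> \<beta>"
  by (cases t) (simp add: cis_mult algebra_simps)
lemma tdeg_neg: "tdeg (negt t) = tdeg t" by (cases t) simp
lemma tdeg_mult: "tdeg (mult p q t) \<le> tdeg t + \<bar>p\<bar> + \<bar>q\<bar>" by (cases t) simp

lemma ev_append: "ev (Z1 @ Z2) \<alpha> \<beta> = ev Z1 \<alpha> \<beta> + ev Z2 \<alpha> \<beta>"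
  by (simp add: ev_def)
lemma ev_neg: "ev (map negt Z) \<alpha> \<beta> = - ev Z \<alpha> \<beta>"
  by (induction Z) (simp_all add: ev_def tv_neg)
lemma ev_mult: "ev (map (mult p q) Z) \<alpha> \<beta> = cis (of_int p * \<alpha> + of_int q * \<beta>) * ev Z \<alpha> \<beta>"
  by (induction Z) (simp_all add: ev_def tv_mult algebra_simps)

lemma degok_append: "degok d (Z1 @ Z2) \<longleftrightarrow> degok d Z1 \<and> degok d Z2"
  by (auto simp: degok_def)
lemma degok_mono: "degok d Z \<Longrightarrow> d \<le> d' \<Longrightarrow> degok d' Z"
  by (force simp: degok_def)
lemma degok_neg: "degok d (map negt Z) = degok d Z"
  by (simp add: degok_def tdeg_neg)
lemma degok_mult: "degok d Z \<Longrightarrow> \<bar>p\<bar> + \<bar>q\<bar> \<le> int k \<Longrightarrow> degok (d + k) (map (mult p q) Z)"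
  unfolding degok_def using tdeg_mult by (smt (verit) imageE list.set_map of_nat_add)

definition vrep :: "nat \<Rightarrow> (real\<Rightarrow>real\<Rightarrow>complex) \<Rightarrow> (real\<Rightarrow>real\<Rightarrow>complex) \<Rightarrow> bool" where
  "vrep d e v \<longleftrightarrow> (\<exists>Z m l. degok d Z \<and> \<bar>m\<bar> + \<bar>l\<bar> \<le> int d + 1 \<and>
     (\<forall>\<alpha> \<beta>. admissible \<alpha> \<beta> \<longrightarrow> v \<alpha> \<beta> = ev Z \<alpha> \<beta> + e \<alpha> \<beta> * cis (of_int m * \<alpha> + of_int l * \<beta>)))"

lemma vrep_rot:
  assumes "vrep d (\<lambda>_ _. 0) p" "vrep d e z" "\<bar>a\<bar> + \<bar>b\<bar> \<le> 2"
    and th: "\<And>\<alpha> \<beta>. th \<alpha> \<beta> = of_int a * \<alpha> + of_int b * \<beta>"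
  shows "vrep (d+2) e (\<lambda>\<alpha> \<beta>. rot (p \<alpha> \<beta>) (th \<alpha> \<beta>) (z \<alpha> \<beta>))"
proof -
  obtain P mp lp where P: "degok d P" "\<forall>\<alpha> \<beta>. admissible \<alpha> \<beta> \<longrightarrow> p \<alpha> \<beta> = ev P \<alpha> \<beta>"
    using assms(1) unfolding vrep_def by auto
  obtain Z m l where Z: "degok d Z" "\<bar>m\<bar> + \<bar>l\<bar> \<le> int d + 1"
    "\<forall>\<alpha> \<beta>. admissible \<alpha> \<beta> \<longrightarrow> z \<alpha> \<beta> = ev Z \<alpha> \<beta> + e \<alpha> \<beta> * cis (of_int m * \<alpha> + of_int l * \<beta>)"
    using assms(2) unfolding vrep_def by auto
  let ?Z = "P @ map (mult a b) (Z @ map negt P)"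
  have "degok (d+2) ?Z"
  proof -
    have "degok d (Z @ map negt P)" using P(1) Z(1) by (simp add: degok_append degok_neg)
    then have "degok (d+2) (map (mult a b) (Z @ map negt P))"
      using degok_mult[of d "Z @ map negt P" a b 2] assms(3) by simp
    moreover have "degok (d+2) P" using P(1) degok_mono by simp
    ultimately show ?thesis by (simp only: degok_append)
  qed
  moreover have "\<bar>m+a\<bar> + \<bar>l+b\<bar> \<le> int (d+2) + 1" using Z(2) assms(3) by linarith
  moreover have "\<forall>\<alpha> \<beta>. admissible \<alpha> \<beta> \<longrightarrow> rot (p \<alpha> \<beta>) (th \<alpha> \<beta>) (z \<alpha> \<beta>) = ev ?Z \<alpha> \<beta> + e \<alpha> \<beta> * cis (of_int (m+a) * \<alpha> + of_int (l+b) * \<beta>)"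
  proof (intro allI impI)
    fix \<alpha> \<beta> assume ad: "admissible \<alpha> \<beta>"
    have c: "cis (of_int (m+a) * \<alpha> + of_int (l+b) * \<beta>) = cis (th \<alpha> \<beta>) * cis (of_int m * \<alpha> + of_int l * \<beta>)"
      by (simp add: th cis_mult algebra_simps)
    show "rot (p \<alpha> \<beta>) (th \<alpha> \<beta>) (z \<alpha> \<beta>) = ev ?Z \<alpha> \<beta> + e \<alpha> \<beta> * cis (of_int (m+a) * \<alpha> + of_int (l+b) * \<beta>)"
    proof -
      have e: "ev ?Z \<alpha> \<beta> = ev P \<alpha> \<beta> + cis (th \<alpha> \<beta>) * (ev Z \<alpha> \<beta> - ev P \<alpha> \<beta>)"
        by (simp only: ev_append ev_neg ev_mult th[symmetric]) simp
      show ?thesis using P(2) Z(3) ad unfolding c e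
        by (simp add: rot_def algebra_simps)
    qed
  qed
  ultimately show ?thesis unfolding vrep_def by blast
qed


lemma tri_apex_eq:
  assumes "admissible \<alpha> \<beta>"
  shows "tri_apex \<alpha> \<beta> = complex_of_real (sin \<beta> / sin (\<alpha> + \<beta>)) * cis \<alpha>"
proof -
  from assms have a: "0 < \<alpha>" "0 < \<beta>" "\<alpha> + \<beta> < pi" by (auto simp: admissible_def)
  have sa: "sin \<alpha> > 0" using a by (intro sin_gt_zero) auto
  have sb: "sin \<beta> > 0" using a by (intro sin_gt_zero) auto
  have sab: "sin (\<alpha> + \<beta>) > 0" using a by (intro sin_gt_zero) auto
  define t0 where "t0 = sin \<beta> / sin (\<alpha> + \<beta>)"
  define s0 where "s0 = sin \<alpha> / sin (\<alpha> + \<beta>)"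
  have eq0: "complex_of_real t0 * cis \<alpha> = 1 + complex_of_real s0 * cis (pi - \<beta>)"
    using sab unfolding t0_def s0_def
    by (simp add: complex_eq_iff field_simps sin_add mult.commute)
  show ?thesis unfolding tri_apex_def
  proof (rule the_equality)
    show "\<exists>t>0. \<exists>s>0. complex_of_real (sin \<beta> / sin (\<alpha> + \<beta>)) * cis \<alpha> = complex_of_real t * cis \<alpha> \<and>
       complex_of_real (sin \<beta> / sin (\<alpha> + \<beta>)) * cis \<alpha> = 1 + complex_of_real s * cis (pi - \<beta>)"
    proof -
      have "t0 > 0" "s0 > 0" using sa sb sab by (simp_all add: t0_def s0_def)
      then show ?thesis using eq0 unfolding t0_def[symmetric] by blast
    qed
  next
    fix c assume "\<exists>t>0. \<exists>s>0. c = complex_of_real t * cis \<alpha> \<and> c = 1 + complex_of_real s * cis (pi - \<beta>)"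
    then obtain t s where ts: "c = complex_of_real t * cis \<alpha>" "c = 1 + complex_of_real s * cis (pi - \<beta>)" by blast
    have "complex_of_real (t - t0) * cis \<alpha> = complex_of_real (s - s0) * cis (pi - \<beta>)"
      using ts eq0 by (simp add: algebra_simps)
    then have r: "(t - t0) * cos \<alpha> = - (s - s0) * cos \<beta>" and i: "(t - t0) * sin \<alpha> = (s - s0) * sin \<beta>"
      by (simp_all add: complex_eq_iff algebra_simps)
    have "(t - t0) * sin (\<alpha> + \<beta>) = (t - t0) * sin \<alpha> * cos \<beta> + (t - t0) * cos \<alpha> * sin \<beta>"
      by (simp add: sin_add algebra_simps)
    also have "\<dots> = 0"
    proof -
      have h1: "(t - t0) * sin \<alpha> * cos \<beta> = (s - s0) * sin \<beta> * cos \<beta>" by (simp only: i)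
      have h2: "(t - t0) * cos \<alpha> * sin \<beta> = - (s - s0) * cos \<beta> * sin \<beta>" by (simp only: r)
      show ?thesis unfolding h1 h2 by (simp add: algebra_simps)
    qed
    finally have "t = t0" using sab by simp
    then show "c = complex_of_real (sin \<beta> / sin (\<alpha> + \<beta>)) * cis \<alpha>" using ts t0_def by simp
  qed
qed

lemma rk_a: "alpha_vertex (rot_kite p th K) = rot p th (alpha_vertex K)"
  by (cases K) (simp add: rot_kite_def alpha_vertex_def)
lemma rk_b: "beta_vertex (rot_kite p th K) = rot p th (beta_vertex K)"
  by (cases K) (simp add: rot_kite_def beta_vertex_def)
lemma rk_c: "side_vertex1 (rot_kite p th K) = rot p th (side_vertex1 K)"
  by (cases K) (simp add: rot_kite_def side_vertex1_def)
lemma rk_d: "side_vertex2 (rot_kite p th K) = rot p th (side_vertex2 K)"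
  by (cases K) (simp add: rot_kite_def side_vertex2_def)

definition rr :: "real \<Rightarrow> real \<Rightarrow> complex" where
  "rr \<alpha> \<beta> = complex_of_real (sin \<beta> / sin (\<alpha> + \<beta>))"

definition INV :: "nat \<Rightarrow> step list \<Rightarrow> bool" where
  "INV d ws \<longleftrightarrow> vrep d (\<lambda>_ _. 0) (\<lambda>\<alpha> \<beta>. alpha_vertex (last_kite \<alpha> \<beta> ws))
    \<and> vrep d (\<lambda>_ _. 0) (\<lambda>\<alpha> \<beta>. beta_vertex (last_kite \<alpha> \<beta> ws))
    \<and> vrep d rr (\<lambda>\<alpha> \<beta>. side_vertex1 (last_kite \<alpha> \<beta> ws))
    \<and> vrep d rr (\<lambda>\<alpha> \<beta>. side_vertex2 (last_kite \<alpha> \<beta> ws))"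

lemma inv_base: "INV 0 []"
proof -
  have A: "vrep 0 (\<lambda>_ _. 0) (\<lambda>\<alpha> \<beta>. alpha_vertex (last_kite \<alpha> \<beta> []))"
    unfolding vrep_def
    by (rule exI[of _ "[]"], rule exI[of _ 0], rule exI[of _ 0])
       (simp add: degok_def ev_def last_kite_def std_kite_def alpha_vertex_def)
  have B: "vrep 0 (\<lambda>_ _. 0) (\<lambda>\<alpha> \<beta>. beta_vertex (last_kite \<alpha> \<beta> []))"
    unfolding vrep_def
    by (rule exI[of _ "[(1,0,0,0)]"], rule exI[of _ 0], rule exI[of _ 0])
       (simp add: degok_def ev_def last_kite_def std_kite_def beta_vertex_def one_complex.ctr)
  have C: "vrep 0 rr (\<lambda>\<alpha> \<beta>. side_vertex1 (last_kite \<alpha> \<beta> []))"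
    unfolding vrep_def
    by (rule exI[of _ "[]"], rule exI[of _ 1], rule exI[of _ 0])
       (simp add: degok_def ev_def last_kite_def std_kite_def side_vertex1_def tri_apex_eq rr_def)
  have D: "vrep 0 rr (\<lambda>\<alpha> \<beta>. side_vertex2 (last_kite \<alpha> \<beta> []))"
    unfolding vrep_def
    by (rule exI[of _ "[]"], rule exI[of _ "-1"], rule exI[of _ 0])
       (simp add: degok_def ev_def last_kite_def std_kite_def side_vertex2_def tri_apex_eq rr_def cis_cnj)
  show ?thesis using A B C D unfolding INV_def by blast
qed

lemma step_gen:
  assumes I: "INV d ws" and p: "vrep d (\<lambda>_ _. 0) p" and ab: "\<bar>a\<bar> + \<bar>b\<bar> \<le> 2"
    and th: "\<And>\<alpha> \<beta>. th \<alpha> \<beta> = of_int a * \<alpha> + of_int b * \<beta>"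
    and lk: "\<And>\<alpha> \<beta>. last_kite \<alpha> \<beta> ws' = rot_kite (p \<alpha> \<beta>) (th \<alpha> \<beta>) (last_kite \<alpha> \<beta> ws)"
  shows "INV (d+2) ws'"
proof -
  have "vrep d (\<lambda>_ _. 0) (\<lambda>\<alpha> \<beta>. alpha_vertex (last_kite \<alpha> \<beta> ws))"
    "vrep d (\<lambda>_ _. 0) (\<lambda>\<alpha> \<beta>. beta_vertex (last_kite \<alpha> \<beta> ws))"
    "vrep d rr (\<lambda>\<alpha> \<beta>. side_vertex1 (last_kite \<alpha> \<beta> ws))"
    "vrep d rr (\<lambda>\<alpha> \<beta>. side_vertex2 (last_kite \<alpha> \<beta> ws))"
    using I unfolding INV_def by auto
  from this[THEN vrep_rot[OF p _ ab th]] show ?thesis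
    unfolding INV_def lk rk_a rk_b rk_c rk_d by simp
qed

lemma inv_step:
  assumes I: "INV d ws"
  shows "INV (d+2) (ws @ [w])"
proof -
  have lk: "\<And>\<alpha> \<beta>. last_kite \<alpha> \<beta> (ws @ [w]) = unfold_step \<alpha> \<beta> (last_kite \<alpha> \<beta> ws) w"
    by (simp add: last_kite_def)
  have A: "vrep d (\<lambda>_ _. 0) (\<lambda>\<alpha> \<beta>. alpha_vertex (last_kite \<alpha> \<beta> ws))"
    and B: "vrep d (\<lambda>_ _. 0) (\<lambda>\<alpha> \<beta>. beta_vertex (last_kite \<alpha> \<beta> ws))"
    using I unfolding INV_def by auto
  show ?thesis
  proof (cases w)
    case AlphaPlus
    show ?thesis by (rule step_gen[OF I A, of 2 0 "\<lambda>\<alpha> \<beta>. 2 * \<alpha>"]) (simp_all add: last_kite_def AlphaPlus)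
  next
    case AlphaMinus
    show ?thesis by (rule step_gen[OF I A, of "-2" 0 "\<lambda>\<alpha> \<beta>. -2 * \<alpha>"]) (simp_all add: last_kite_def AlphaMinus)
  next
    case BetaPlus
    show ?thesis by (rule step_gen[OF I B, of 0 2 "\<lambda>\<alpha> \<beta>. 2 * \<beta>"]) (simp_all add: last_kite_def BetaPlus)
  next
    case BetaMinus
    show ?thesis by (rule step_gen[OF I B, of 0 "-2" "\<lambda>\<alpha> \<beta>. -2 * \<beta>"]) (simp_all add: last_kite_def BetaMinus)
  qed
qed

lemma inv_all: "INV (2 * length ws) ws"
proof (induction ws rule: rev_induct)
  case Nil then show ?case using inv_base by simp
next
  case (snoc x xs) then show ?case using inv_step[of "2 * length xs" xs x] by simp
qed



definition SS :: "nat \<Rightarrow> (int \<times> int) set" where "SS d = {(a, b). \<bar>a\<bar> + \<bar>b\<bar> \<le> int d}"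

lemma finite_SS: "finite (SS d)"
proof -
  have "SS d \<subseteq> {- int d..int d} \<times> {- int d..int d}" unfolding SS_def by auto
  then show ?thesis by (rule finite_subset) auto
qed

definition tps :: "nat \<Rightarrow> (int \<times> int \<Rightarrow> int) \<Rightarrow> (int \<times> int \<Rightarrow> int) \<Rightarrow> real \<Rightarrow> real \<Rightarrow> real" where
  "tps d c s \<alpha> \<beta> = (\<Sum>(a, b) \<in> SS d.
        of_int (c (a, b)) * cos (of_int a * \<alpha> + of_int b * \<beta>)
      + of_int (s (a, b)) * sin (of_int a * \<alpha> + of_int b * \<beta>))"

lemma trig_poly_on_iff: "trig_poly_on d f \<longleftrightarrow> (\<exists>c s. \<forall>\<alpha> \<beta>. admissible \<alpha> \<beta> \<longrightarrow> f \<alpha> \<beta> = tps d c s \<alpha> \<beta>)"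
  unfolding trig_poly_on_def tps_def SS_def by simp

lemma tps_zero: "tps d (\<lambda>_. 0) (\<lambda>_. 0) \<alpha> \<beta> = 0"
  unfolding tps_def by (simp add: split_def)

lemma tps_add: "tps d (\<lambda>k. c1 k + c2 k) (\<lambda>k. s1 k + s2 k) \<alpha> \<beta> = tps d c1 s1 \<alpha> \<beta> + tps d c2 s2 \<alpha> \<beta>"
  unfolding tps_def by (simp add: split_def sum.distrib[symmetric] algebra_simps)

lemma tps_delta:
  assumes "(a, b) \<in> SS d"
  shows "tps d (\<lambda>k. if k = (a,b) then x else 0) (\<lambda>k. if k = (a,b) then y else 0) \<alpha> \<beta>
     = of_int x * cos (of_int a * \<alpha> + of_int b * \<beta>) + of_int y * sin (of_int a * \<alpha> + of_int b * \<beta>)"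
proof -
  have "tps d (\<lambda>k. if k = (a,b) then x else 0) (\<lambda>k. if k = (a,b) then y else 0) \<alpha> \<beta>
    = (\<Sum>k \<in> SS d. if k = (a,b) then of_int x * cos (of_int a * \<alpha> + of_int b * \<beta>) + of_int y * sin (of_int a * \<alpha> + of_int b * \<beta>) else 0)"
    unfolding tps_def
  proof (rule sum.cong[OF refl])
    fix k assume "k \<in> SS d"
    show "(case k of (a', b') \<Rightarrow> of_int (if (a', b') = (a,b) then x else 0) * cos (of_int a' * \<alpha> + of_int b' * \<beta>)
      + of_int (if (a', b') = (a,b) then y else 0) * sin (of_int a' * \<alpha> + of_int b' * \<beta>))
      = (if k = (a,b) then of_int x * cos (of_int a * \<alpha> + of_int b * \<beta>) + of_int y * sin (of_int a * \<alpha> + of_int b * \<beta>) else 0)"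
      by (cases k) auto
  qed
  also have "\<dots> = of_int x * cos (of_int a * \<alpha> + of_int b * \<beta>) + of_int y * sin (of_int a * \<alpha> + of_int b * \<beta>)"
    using assms finite_SS by (simp add: sum.delta')
  finally show ?thesis .
qed

lemma ev_tps:
  assumes "degok d Z"
  shows "(\<exists>c s. \<forall>\<alpha> \<beta>. Re (ev Z \<alpha> \<beta>) = tps d c s \<alpha> \<beta>) \<and> (\<exists>c s. \<forall>\<alpha> \<beta>. Im (ev Z \<alpha> \<beta>) = tps d c s \<alpha> \<beta>)"
  using assms
proof (induction Z)
  case Nil
  show ?case by (simp add: ev_def) (metis tps_zero)
next
  case (Cons t Z)
  obtain x y a b where t: "t = (x, y, a, b)" by (cases t) auto
  have dZ: "degok d Z" and ab: "(a, b) \<in> SS d"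
    using Cons.prems t by (auto simp: degok_def SS_def)
  have evc: "ev (t # Z) \<alpha> \<beta> = tv t \<alpha> \<beta> + ev Z \<alpha> \<beta>" for \<alpha> \<beta> by (simp add: ev_def)
  obtain c s where cs: "\<forall>\<alpha> \<beta>. Re (ev Z \<alpha> \<beta>) = tps d c s \<alpha> \<beta>" using Cons.IH[OF dZ] by blast
  obtain c' s' where cs': "\<forall>\<alpha> \<beta>. Im (ev Z \<alpha> \<beta>) = tps d c' s' \<alpha> \<beta>" using Cons.IH[OF dZ] by blast
  have "\<forall>\<alpha> \<beta>. Re (ev (t # Z) \<alpha> \<beta>) = tps d (\<lambda>k. (if k = (a,b) then x else 0) + c k) (\<lambda>k. (if k = (a,b) then -y else 0) + s k) \<alpha> \<beta>"
    using cs by (simp only: tps_add tps_delta[OF ab] evc) (simp add: t)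
  moreover have "\<forall>\<alpha> \<beta>. Im (ev (t # Z) \<alpha> \<beta>) = tps d (\<lambda>k. (if k = (a,b) then y else 0) + c' k) (\<lambda>k. (if k = (a,b) then x else 0) + s' k) \<alpha> \<beta>"
    using cs' by (simp only: tps_add tps_delta[OF ab] evc) (simp add: t)
  ultimately show ?case by blast
qed

lemma ev_trig:
  assumes "degok d Z"
  shows "trig_poly_on d (\<lambda>\<alpha> \<beta>. Re (ev Z \<alpha> \<beta>))" "trig_poly_on d (\<lambda>\<alpha> \<beta>. Im (ev Z \<alpha> \<beta>))"
  using conjunct1[OF ev_tps[OF assms]] conjunct2[OF ev_tps[OF assms]] unfolding trig_poly_on_iff by blast+

lemma trig_cong:
  assumes "trig_poly_on d f" "\<And>\<alpha> \<beta>. admissible \<alpha> \<beta> \<Longrightarrow> g \<alpha> \<beta> = f \<alpha> \<beta>"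
  shows "trig_poly_on d g"
proof -
  from assms(1) obtain c s where H: "\<forall>\<alpha> \<beta>. admissible \<alpha> \<beta> \<longrightarrow> f \<alpha> \<beta> = tps d c s \<alpha> \<beta>"
    unfolding trig_poly_on_iff by blast
  have "\<forall>\<alpha> \<beta>. admissible \<alpha> \<beta> \<longrightarrow> g \<alpha> \<beta> = tps d c s \<alpha> \<beta>" using H assms(2) by simp
  then show ?thesis unfolding trig_poly_on_iff by blast
qed

lemma vrep0_trig:
  assumes "vrep d (\<lambda>_ _. 0) v"
  shows "trig_poly_on d (\<lambda>\<alpha> \<beta>. Re (v \<alpha> \<beta>)) \<and> trig_poly_on d (\<lambda>\<alpha> \<beta>. Im (v \<alpha> \<beta>))"
proof -
  obtain Z where Z: "degok d Z" "\<forall>\<alpha> \<beta>. admissible \<alpha> \<beta> \<longrightarrow> v \<alpha> \<beta> = ev Z \<alpha> \<beta>"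
    using assms unfolding vrep_def by auto
  have 1: "trig_poly_on d (\<lambda>\<alpha> \<beta>. Re (v \<alpha> \<beta>))"
    by (rule trig_cong[OF ev_trig(1)[OF Z(1)]]) (simp add: Z(2))
  have 2: "trig_poly_on d (\<lambda>\<alpha> \<beta>. Im (v \<alpha> \<beta>))"
    by (rule trig_cong[OF ev_trig(2)[OF Z(1)]]) (simp add: Z(2))
  show ?thesis using 1 2 by blast
qed

lemma vrepr_trig:
  assumes "vrep d rr v"
  shows "\<exists>P Q :: real \<Rightarrow> real \<Rightarrow> real. \<exists>m l :: int.
             trig_poly_on d P \<and> trig_poly_on d Q \<and>
             \<bar>m\<bar> + \<bar>l\<bar> \<le> int d + 1 \<and>
             (\<forall>\<alpha> \<beta>. admissible \<alpha> \<beta> \<longrightarrow>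
                Re (v \<alpha> \<beta>) =
                  P \<alpha> \<beta> + sin \<beta> / sin (\<alpha> + \<beta>) * cos (of_int m * \<alpha> + of_int l * \<beta>) \<and>
                Im (v \<alpha> \<beta>) =
                  Q \<alpha> \<beta> + sin \<beta> / sin (\<alpha> + \<beta>) * sin (of_int m * \<alpha> + of_int l * \<beta>))"
proof -
  obtain Z m l where Z: "degok d Z" "\<bar>m\<bar> + \<bar>l\<bar> \<le> int d + 1"
    "\<forall>\<alpha> \<beta>. admissible \<alpha> \<beta> \<longrightarrow> v \<alpha> \<beta> = ev Z \<alpha> \<beta> + rr \<alpha> \<beta> * cis (of_int m * \<alpha> + of_int l * \<beta>)"
    using assms unfolding vrep_def by blast
  have "\<forall>\<alpha> \<beta>. admissible \<alpha> \<beta> \<longrightarrow>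
                Re (v \<alpha> \<beta>) =
                  Re (ev Z \<alpha> \<beta>) + sin \<beta> / sin (\<alpha> + \<beta>) * cos (of_int m * \<alpha> + of_int l * \<beta>) \<and>
                Im (v \<alpha> \<beta>) =
                  Im (ev Z \<alpha> \<beta>) + sin \<beta> / sin (\<alpha> + \<beta>) * sin (of_int m * \<alpha> + of_int l * \<beta>)"
    using Z(3) by (simp add: rr_def)
  then show ?thesis using Z(2) ev_trig[OF Z(1)] by blast
qed

theorem lemma3p1:
  fixes ws :: "step list" and n :: nat
  assumes "n = length ws + 1"
  shows "trig_poly_on (2 * n - 2) (\<lambda>\<alpha> \<beta>. Re (alpha_vertex (last_kite \<alpha> \<beta> ws)))
       \<and> trig_poly_on (2 * n - 2) (\<lambda>\<alpha> \<beta>. Im (alpha_vertex (last_kite \<alpha> \<beta> ws)))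
       \<and> trig_poly_on (2 * n - 2) (\<lambda>\<alpha> \<beta>. Re (beta_vertex (last_kite \<alpha> \<beta> ws)))
       \<and> trig_poly_on (2 * n - 2) (\<lambda>\<alpha> \<beta>. Im (beta_vertex (last_kite \<alpha> \<beta> ws)))
       \<and> (\<forall>sv \<in> {side_vertex1, side_vertex2}.
           \<exists>P Q :: real \<Rightarrow> real \<Rightarrow> real. \<exists>m l :: int.
             trig_poly_on (2 * n - 2) P \<and> trig_poly_on (2 * n - 2) Q \<and>
             \<bar>m\<bar> + \<bar>l\<bar> \<le> int (2 * n - 1) \<and>
             (\<forall>\<alpha> \<beta>. admissible \<alpha> \<beta> \<longrightarrow>
                Re (sv (last_kite \<alpha> \<beta> ws)) =
                  P \<alpha> \<beta> + sin \<beta> / sin (\<alpha> + \<beta>) * cos (of_int m * \<alpha> + of_int l * \<beta>) \<and>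
                Im (sv (last_kite \<alpha> \<beta> ws)) =
                  Q \<alpha> \<beta> + sin \<beta> / sin (\<alpha> + \<beta>) * sin (of_int m * \<alpha> + of_int l * \<beta>)))"
proof -
  have d1: "2 * n - 2 = 2 * length ws" and d2: "int (2 * n - 1) = int (2 * length ws) + 1"
    using assms by auto
  have I: "INV (2 * length ws) ws" by (rule inv_all)
  note I' = I[unfolded INV_def]
  have A: "trig_poly_on (2 * length ws) (\<lambda>\<alpha> \<beta>. Re (alpha_vertex (last_kite \<alpha> \<beta> ws)))
       \<and> trig_poly_on (2 * length ws) (\<lambda>\<alpha> \<beta>. Im (alpha_vertex (last_kite \<alpha> \<beta> ws)))"
    by (rule vrep0_trig[OF I'[THEN conjunct1]])
  have B: "trig_poly_on (2 * length ws) (\<lambda>\<alpha> \<beta>. Re (beta_vertex (last_kite \<alpha> \<beta> ws)))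
       \<and> trig_poly_on (2 * length ws) (\<lambda>\<alpha> \<beta>. Im (beta_vertex (last_kite \<alpha> \<beta> ws)))"
    by (rule vrep0_trig[OF I'[THEN conjunct2, THEN conjunct1]])
  note C = vrepr_trig[OF I'[THEN conjunct2, THEN conjunct2, THEN conjunct1]]
  note D = vrepr_trig[OF I'[THEN conjunct2, THEN conjunct2, THEN conjunct2]]
  have CD: "\<forall>sv \<in> {side_vertex1, side_vertex2}.
           \<exists>P Q :: real \<Rightarrow> real \<Rightarrow> real. \<exists>m l :: int.
             trig_poly_on (2 * length ws) P \<and> trig_poly_on (2 * length ws) Q \<and>
             \<bar>m\<bar> + \<bar>l\<bar> \<le> int (2 * length ws) + 1 \<and>
             (\<forall>\<alpha> \<beta>. admissible \<alpha> \<beta> \<longrightarrow>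
                Re (sv (last_kite \<alpha> \<beta> ws)) =
                  P \<alpha> \<beta> + sin \<beta> / sin (\<alpha> + \<beta>) * cos (of_int m * \<alpha> + of_int l * \<beta>) \<and>
                Im (sv (last_kite \<alpha> \<beta> ws)) =
                  Q \<alpha> \<beta> + sin \<beta> / sin (\<alpha> + \<beta>) * sin (of_int m * \<alpha> + of_int l * \<beta>))"
    using C D by blast
  show ?thesis unfolding d1 d2 using A B CD by blast
qed

end
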